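(* Let $n\ge2$ and $k\ge1$ be integers. Then $\mathcal{M}(n,k)\ge\binom{n+k-1}{k}$. Moreover, if a $(k,k)$-design $C\subset\mathbb{S}^{n-1}$ has exactly $\binom{n+k-1}{k}$ points, then for all distinct $x,y\in C$ the inner product $\langle x,y\rangle$ is a zero of $P_k^{(n+2)}(t)$.
   Context: For $m\ge 2$, let $P_i^{(m)}(t)$ be the normalized Gegenbauer polynomials: $P_0^{(m)}=1$, $P_1^{(m)}=t$, and $(i+m-2)P_{i+1}^{(m)}(t)=(2i+m-2)tP_i^{(m)}(t)-iP_{i-1}^{(m)}(t)$ for $i\ge1$. For a finite nonempty $C\subset\mathbb{S}^{n-1}$, its moments are $M_i(C)=\sum_{x,y\in C}P_i^{(n)}(\langle x,y\rangle)$. $C$ is a spherical $(k,k)$-design if $M_{2i}(C)=0$ for $i=1,\dots,k$. $\mathcal{M}(n,k)$ is the minimum cardinality of a $(k,k)$-design in $\mathbb{S}^{n-1}$. *)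

theory Defs
  imports "HOL-Analysis.Analysis"
begin

fun gegenbauer :: "nat \<Rightarrow> nat \<Rightarrow> real \<Rightarrow> real" where
  "gegenbauer m 0 t = 1"
| "gegenbauer m (Suc 0) t = t"
| "gegenbauer m (Suc (Suc i)) t =
     ((2 * real (Suc i) + real m - 2) * t * gegenbauer m (Suc i) t
       - real (Suc i) * gegenbauer m i t) / (real (Suc i) + real m - 2)"

definition sphere_moment :: "nat \<Rightarrow> (real ^ 'n) set \<Rightarrow> real" where
  "sphere_moment i C = (\<Sum>x\<in>C. \<Sum>y\<in>C. gegenbauer CARD('n) i (x \<bullet> y))"

definition kk_design :: "nat \<Rightarrow> (real ^ 'n) set \<Rightarrow> bool" where
  "kk_design k C \<longleftrightarrow> finite C \<and> C \<noteq> {} \<and> C \<subseteq> sphere 0 1 \<and>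
     (\<forall>i\<in>{1..k}. sphere_moment (2 * i) C = 0)"

end

theory Submission
  imports Defs
begin


definition DD :: "nat \<Rightarrow> nat \<Rightarrow> real" where
  "DD n k = real ((n + k - 1) choose k)"

lemma DD_pos: "n \<ge> 1 \<Longrightarrow> DD n k > 0"
  unfolding DD_def by simp

lemma DD_0: "DD n 0 = 1" unfolding DD_def by simp

lemma DD_Suc: "n \<ge> 1 \<Longrightarrow> DD n (Suc k) = DD n k * (real n + real k) / (real k + 1)"
proof -
  assume n: "n \<ge> 1"
  have "Suc (n + k - 1) * ((n + k - 1) choose k) = (Suc (n + k - 1) choose Suc k) * Suc k"
    by (rule Suc_times_binomial_eq)
  moreover have "Suc (n + k - 1) = n + k" using n by simp
  moreover have "n + Suc k - 1 = n + k" using n by simp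
  ultimately have "real (n + k) * real ((n + k - 1) choose k) = real ((n + Suc k - 1) choose Suc k) * real (Suc k)"
    by (metis of_nat_mult)
  then show ?thesis unfolding DD_def by (simp add: field_simps)
qed

lemma DD_1: "n \<ge> 1 \<Longrightarrow> DD n 1 = real n"
  using DD_Suc[of n 0] by (simp add: DD_0)

definition dd :: "nat \<Rightarrow> nat \<Rightarrow> real" where
  "dd n i = (if i = 0 then 1 else DD n i * (2 * real i + real n - 2) * (real n - 1)
              / ((real n + real i - 1) * (real n + real i - 2)))"

lemma dd_pos: "n \<ge> 2 \<Longrightarrow> dd n i > 0"
proof (cases "i = 0")
  case False
  assume n: "n \<ge> 2"
  have "DD n i > 0" using n DD_pos by simp
  moreover have "2 * real i + real n - 2 > 0" "real n - 1 > 0" "real n + real i - 1 > 0"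
     "real n + real i - 2 > 0" using n False by auto
  ultimately show ?thesis using False unfolding dd_def by simp
qed (simp add: dd_def)

lemma dd_1: "n \<ge> 2 \<Longrightarrow> dd n 1 = real n"
proof -
  assume n: "n \<ge> 2"
  have "real n - 1 > 0" using n by simp
  moreover have "DD n (Suc 0) = real n" using DD_1[of n] n by simp
  ultimately show ?thesis using n unfolding dd_def by (simp add: field_simps)
qed

lemma dd_ratio_aux:
  fixes a b X :: real
  assumes "a + b - 1 > 0" "a + b - 2 > 0" "a + b > 0" "b + 1 > 0"
  shows "X * (a + b) / (b + 1) * (2 * b + a) * (a - 1) / ((a + b) * (a + b - 1)) * ((b + 1) * (2 * b + a - 2))
     = X * (2 * b + a - 2) * (a - 1) / ((a + b - 1) * (a + b - 2)) * ((2 * b + a) * (b + a - 2))"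
proof -
  have ne: "a + b - 1 \<noteq> 0" "a + b - 2 \<noteq> 0" "a + b \<noteq> 0" "b + 1 \<noteq> 0" "b + a - 2 \<noteq> 0" using assms by auto
  then show ?thesis by (simp add: divide_simps)
qed

lemma dd_ratio:
  assumes n: "n \<ge> 2" and i: "i \<ge> 1"
  shows "dd n (Suc i) * ((real i + 1) * (2 * real i + real n - 2))
       = dd n i * ((2 * real i + real n) * (real i + real n - 2))"
proof -
  have a: "real n + real i - 1 > 0" "real n + real i - 2 > 0" "real n + real i > 0" "real i + 1 > 0"
    using n i by auto
  have "dd n (Suc i) = DD n i * (real n + real i) / (real i + 1) * (2 * real i + real n) * (real n - 1)
              / ((real n + real i) * (real n + real i - 1))"
    unfolding dd_def using DD_Suc[of n i] n by (simp add: algebra_simps)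
  moreover have "dd n i = DD n i * (2 * real i + real n - 2) * (real n - 1)
              / ((real n + real i - 1) * (real n + real i - 2))"
    unfolding dd_def using i by simp
  ultimately show ?thesis using dd_ratio_aux[OF a] by simp
qed

lemma geg_one: "m \<ge> 2 \<Longrightarrow> t = 1 \<Longrightarrow> gegenbauer m i t = 1"
proof (induction m i t rule: gegenbauer.induct)
  case (3 m i t)
  have "real (Suc i) + real m - 2 > 0" using 3 by simp
  then show ?case using 3 by (simp add: field_simps)
qed auto

lemma geg_rec:
  assumes "m \<ge> 2"
  shows "(real k + real m - 2) * gegenbauer m (Suc k) t
     = (2 * real k + real m - 2) * t * gegenbauer m k t - real k * gegenbauer m (k - 1) t"
proof (cases k)
  case (Suc j)
  have "real (Suc j) + real m - 2 > 0" using assms by simp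
  then show ?thesis using Suc by (simp add: field_simps)
qed simp


declare gegenbauer.simps(3)[simp del]

lemma iii_aux:
  assumes n: "n \<ge> 2"
  shows "(real n - 1) * gegenbauer n k t
           = (real n + real k - 1) * gegenbauer (n+2) k t - real k * t * gegenbauer (n+2) (k - 1) t
       \<and> (real n - 1) * gegenbauer n (Suc k) t
           = (real n + real (Suc k) - 1) * gegenbauer (n+2) (Suc k) t - real (Suc k) * t * gegenbauer (n+2) k t"
proof (induction k)
  case 0
  then show ?case by (simp add: algebra_simps)
next
  case (Suc k)
  let ?P = "gegenbauer n" and ?Q = "gegenbauer (n+2)"
  have H0: "(real n - 1) * ?P k t = (real n + real k - 1) * ?Q k t - real k * t * ?Q (k - 1) t"
    and H1: "(real n - 1) * ?P (Suc k) t = (real n + real (Suc k) - 1) * ?Q (Suc k) t - real (Suc k) * t * ?Q k t"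
    using Suc by auto
  have RP: "(real (Suc k) + real n - 2) * ?P (Suc (Suc k)) t
     = (2 * real (Suc k) + real n - 2) * t * ?P (Suc k) t - real (Suc k) * ?P k t"
    using geg_rec[of n "Suc k" t] n by simp
  have RQ1: "(real k + real (n+2) - 2) * ?Q (Suc k) t
     = (2 * real k + real (n+2) - 2) * t * ?Q k t - real k * ?Q (k - 1) t"
    using geg_rec[of "n+2" k t] n by simp
  have RQ2: "(real (Suc k) + real (n+2) - 2) * ?Q (Suc (Suc k)) t
     = (2 * real (Suc k) + real (n+2) - 2) * t * ?Q (Suc k) t - real (Suc k) * ?Q k t"
    using geg_rec[of "n+2" "Suc k" t] n by simp
  have "(real k + real n - 1) * ((real n - 1) * ?P (Suc (Suc k)) t
      - ((real n + real (Suc (Suc k)) - 1) * ?Q (Suc (Suc k)) t - real (Suc (Suc k)) * t * ?Q (Suc k) t)) = 0"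
  proof -
    have "(real k + real n - 1) * ((real n - 1) * ?P (Suc (Suc k)) t
      - ((real n + real (Suc (Suc k)) - 1) * ?Q (Suc (Suc k)) t - real (Suc (Suc k)) * t * ?Q (Suc k) t))
      = (real n - 1) * ((real (Suc k) + real n - 2) * ?P (Suc (Suc k)) t
           - ((2 * real (Suc k) + real n - 2) * t * ?P (Suc k) t - real (Suc k) * ?P k t))
      + (2 * real k + real n) * t * ((real n - 1) * ?P (Suc k) t
           - ((real n + real (Suc k) - 1) * ?Q (Suc k) t - real (Suc k) * t * ?Q k t))
      - (real k + 1) * ((real n - 1) * ?P k t
           - ((real n + real k - 1) * ?Q k t - real k * t * ?Q (k - 1) t))
      - (real k + real n - 1) * ((real (Suc k) + real (n+2) - 2) * ?Q (Suc (Suc k)) t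
           - ((2 * real (Suc k) + real (n+2) - 2) * t * ?Q (Suc k) t - real (Suc k) * ?Q k t))
      + (real k + 1) * t * ((real k + real (n+2) - 2) * ?Q (Suc k) t
           - ((2 * real k + real (n+2) - 2) * t * ?Q k t - real k * ?Q (k - 1) t))"
      by (simp add: algebra_simps)
    also have "\<dots> = 0" using H0 H1 RP RQ1 RQ2 by simp
    finally show ?thesis .
  qed
  moreover have "real k + real n - 1 \<noteq> 0" using n by simp
  ultimately show ?case using H1 by simp
qed

lemma iii:
  assumes n: "n \<ge> 2"
  shows "(real n - 1) * gegenbauer n k t
           = (real n + real k - 1) * gegenbauer (n+2) k t - real k * t * gegenbauer (n+2) (k - 1) t"
  using iii_aux[OF n] by blast

lemma two_term:
  assumes n: "n \<ge> 2"
  shows "DD n (Suc (Suc j)) * gegenbauer (n+2) (Suc (Suc j)) t - DD n j * gegenbauer (n+2) j t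
       = dd n (Suc (Suc j)) * gegenbauer n (Suc (Suc j)) t"
proof -
  let ?P = "gegenbauer n" and ?Q = "gegenbauer (n+2)"
  have H: "(real n - 1) * ?P (Suc (Suc j)) t
     = (real n + real (Suc (Suc j)) - 1) * ?Q (Suc (Suc j)) t - real (Suc (Suc j)) * t * ?Q (Suc j) t"
    using iii[OF n, of "Suc (Suc j)" t] by simp
  have RQ: "(real (Suc j) + real (n+2) - 2) * ?Q (Suc (Suc j)) t
     = (2 * real (Suc j) + real (n+2) - 2) * t * ?Q (Suc j) t - real (Suc j) * ?Q j t"
    using geg_rec[of "n+2" "Suc j" t] n by simp
  have E: "(real n - 1) * (2 * real j + real n + 2) * ?P (Suc (Suc j)) t
     = (real n + real j + 1) * (real n + real j) * ?Q (Suc (Suc j)) t - (real j + 2) * (real j + 1) * ?Q j t"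
  proof -
    have "(real n - 1) * (2 * real j + real n + 2) * ?P (Suc (Suc j)) t
     - ((real n + real j + 1) * (real n + real j) * ?Q (Suc (Suc j)) t - (real j + 2) * (real j + 1) * ?Q j t)
      = (2 * real j + real n + 2) * ((real n - 1) * ?P (Suc (Suc j)) t
           - ((real n + real (Suc (Suc j)) - 1) * ?Q (Suc (Suc j)) t - real (Suc (Suc j)) * t * ?Q (Suc j) t))
        + (real j + 2) * ((real (Suc j) + real (n+2) - 2) * ?Q (Suc (Suc j)) t
           - ((2 * real (Suc j) + real (n+2) - 2) * t * ?Q (Suc j) t - real (Suc j) * ?Q j t))"
      by (simp add: algebra_simps)
    also have "\<dots> = 0" using H RQ by simp
    finally show ?thesis by simp
  qed
  have D1: "DD n (Suc j) = DD n j * (real n + real j) / (real j + 1)" using DD_Suc[of n j] n by simp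
  have D2: "DD n (Suc (Suc j)) = DD n (Suc j) * (real n + real j + 1) / (real j + 2)"
    using DD_Suc[of n "Suc j"] n by (simp add: algebra_simps)
  have dd2: "dd n (Suc (Suc j)) = DD n (Suc (Suc j)) * (2 * real j + real n + 2) * (real n - 1)
              / ((real n + real j + 1) * (real n + real j))"
    unfolding dd_def by (simp add: algebra_simps)
  have ne: "real j + 1 \<noteq> 0" "real j + 2 \<noteq> 0" "real n + real j + 1 \<noteq> 0" "real n + real j \<noteq> 0"
    using n by auto
  have "DD n (Suc (Suc j)) * ?Q (Suc (Suc j)) t - DD n j * ?Q j t
     = DD n j / ((real j + 1) * (real j + 2)) * ((real n + real j + 1) * (real n + real j) * ?Q (Suc (Suc j)) t - (real j + 2) * (real j + 1) * ?Q j t)"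
    unfolding D2 D1 using ne by (simp add: divide_simps) (simp add: algebra_simps)
  also have "\<dots> = DD n j / ((real j + 1) * (real j + 2)) * ((real n - 1) * (2 * real j + real n + 2) * ?P (Suc (Suc j)) t)"
    using E by simp
  also have "\<dots> = dd n (Suc (Suc j)) * ?P (Suc (Suc j)) t"
    unfolding dd2 D2 D1 using ne by (simp add: divide_simps)
  finally show ?thesis .
qed



definition cf :: "nat \<Rightarrow> nat \<Rightarrow> nat \<Rightarrow> real" where
  "cf n k i = (if even (k - i) then dd n i / DD n k else 0)"

lemma Q_exp:
  assumes n: "n \<ge> 2"
  shows "gegenbauer (n+2) k t = (\<Sum>i\<le>k. cf n k i * gegenbauer n i t)"
proof (induction k rule: less_induct)
  case (less k)
  show ?case
  proof (cases k)
    case 0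
    then show ?thesis by (simp add: cf_def dd_def DD_0)
  next
    case (Suc k1)
    show ?thesis
    proof (cases k1)
      case 0
      have "DD n 1 = real n" "dd n 1 = real n" using DD_1 dd_1 n by auto
      moreover have "real n \<noteq> 0" using n by simp
      ultimately show ?thesis using Suc 0 by (simp add: cf_def)
    next
      case (Suc j)
      have k: "k = Suc (Suc j)" using \<open>k = Suc k1\<close> Suc by simp
      let ?P = "gegenbauer n" and ?Q = "gegenbauer (n+2)"
      have IH: "?Q j t = (\<Sum>i\<le>j. cf n j i * ?P i t)" using less k by simp
      have TT: "DD n (Suc (Suc j)) * ?Q (Suc (Suc j)) t - DD n j * ?Q j t
         = dd n (Suc (Suc j)) * ?P (Suc (Suc j)) t" using two_term[OF n] by simp
      have Dp: "DD n (Suc (Suc j)) > 0" "DD n j > 0" using DD_pos n by auto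
      have s: "(\<Sum>i\<le>Suc (Suc j). cf n (Suc (Suc j)) i * ?P i t)
         = (\<Sum>i\<le>j. cf n (Suc (Suc j)) i * ?P i t) + cf n (Suc (Suc j)) (Suc j) * ?P (Suc j) t
            + cf n (Suc (Suc j)) (Suc (Suc j)) * ?P (Suc (Suc j)) t"
        by (simp add: atMost_Suc algebra_simps)
      have c1: "cf n (Suc (Suc j)) (Suc j) = 0" by (simp add: cf_def)
      have c2: "cf n (Suc (Suc j)) (Suc (Suc j)) = dd n (Suc (Suc j)) / DD n (Suc (Suc j))"
        by (simp add: cf_def)
      have c3: "(\<Sum>i\<le>j. cf n (Suc (Suc j)) i * ?P i t)
          = DD n j / DD n (Suc (Suc j)) * (\<Sum>i\<le>j. cf n j i * ?P i t)"
        unfolding sum_distrib_left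
      proof (rule sum.cong[OF refl])
        fix i assume "i \<in> {..j}"
        then have "Suc (Suc j) - i = Suc (Suc (j - i))" by auto
        then show "cf n (Suc (Suc j)) i * ?P i t = DD n j / DD n (Suc (Suc j)) * (cf n j i * ?P i t)"
          using Dp by (simp add: cf_def)
      qed
      have "?Q (Suc (Suc j)) t = (DD n j * ?Q j t + dd n (Suc (Suc j)) * ?P (Suc (Suc j)) t) / DD n (Suc (Suc j))"
        using TT Dp by (simp add: field_simps)
      also have "\<dots> = (\<Sum>i\<le>Suc (Suc j). cf n (Suc (Suc j)) i * ?P i t)"
        unfolding s c1 c2 c3 IH[symmetric] using Dp by (simp add: field_simps)
      finally show ?thesis using k by simp
    qed
  qed
qed

definition hexp :: "nat \<Rightarrow> nat \<Rightarrow> nat \<Rightarrow> real \<Rightarrow> (real \<Rightarrow> real) \<Rightarrow> bool" where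
  "hexp n m p c f \<longleftrightarrow> (\<exists>a. (\<forall>t. f t = (\<Sum>l\<le>m. a l * gegenbauer n l t)) \<and> a 0 = c
      \<and> (\<forall>l. odd (l + p) \<longrightarrow> a l = 0))"

lemma hexp_P: "hexp n j j (if j = 0 then 1 else 0) (gegenbauer n j)"
  unfolding hexp_def
proof (rule exI[of _ "\<lambda>l. if l = j then 1 else 0"], intro conjI allI impI)
  fix t
  have "(\<Sum>l\<le>j. (if l = j then 1 else 0) * gegenbauer n l t) = (\<Sum>l\<le>j. if l = j then gegenbauer n l t else 0)"
    by (rule sum.cong) auto
  also have "\<dots> = gegenbauer n j t" by simp
  finally show "gegenbauer n j t = (\<Sum>l\<le>j. (if l = j then 1 else 0) * gegenbauer n l t)" by simp
qed auto

lemma hexp_zero: "hexp n m p 0 (\<lambda>t. 0)"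
  unfolding hexp_def by (rule exI[of _ "\<lambda>l. 0"]) simp

lemma hexp_cong: "hexp n m p c f \<Longrightarrow> (\<And>t. f t = g t) \<Longrightarrow> c = c' \<Longrightarrow> hexp n m p c' g"
  unfolding hexp_def by metis

lemma hexp_weaken:
  assumes "hexp n m p c f" "m \<le> m'" "even (p + p')"
  shows "hexp n m' p' c f"
proof -
  obtain a where a: "\<forall>t. f t = (\<Sum>l\<le>m. a l * gegenbauer n l t)" "a 0 = c"
      "\<forall>l. odd (l + p) \<longrightarrow> a l = 0"
    using assms(1) unfolding hexp_def by blast
  let ?b = "\<lambda>l. if l \<le> m then a l else 0"
  have "\<forall>t. f t = (\<Sum>l\<le>m'. ?b l * gegenbauer n l t)"
  proof
    fix t
    have "(\<Sum>l\<le>m'. ?b l * gegenbauer n l t) = (\<Sum>l\<le>m. ?b l * gegenbauer n l t)"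
      by (rule sum.mono_neutral_right) (use assms(2) in auto)
    also have "\<dots> = (\<Sum>l\<le>m. a l * gegenbauer n l t)" by simp
    finally show "f t = (\<Sum>l\<le>m'. ?b l * gegenbauer n l t)" using a(1) by simp
  qed
  moreover have "\<forall>l. odd (l + p') \<longrightarrow> ?b l = 0"
  proof (intro allI impI)
    fix l assume "odd (l + p')"
    then have "odd (l + p)" using assms(3) by presburger
    then show "?b l = 0" using a(3) by simp
  qed
  ultimately show ?thesis unfolding hexp_def using a(2) by (intro exI[of _ ?b]) simp
qed

lemma hexp_lin2:
  assumes "hexp n m p c1 f" "hexp n m p c2 g"
  shows "hexp n m p (r1 * c1 + r2 * c2) (\<lambda>t. r1 * f t + r2 * g t)"
proof -
  obtain a where a: "\<forall>t. f t = (\<Sum>l\<le>m. a l * gegenbauer n l t)" "a 0 = c1"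
      "\<forall>l. odd (l + p) \<longrightarrow> a l = 0"
    using assms(1) unfolding hexp_def by blast
  obtain b where b: "\<forall>t. g t = (\<Sum>l\<le>m. b l * gegenbauer n l t)" "b 0 = c2"
      "\<forall>l. odd (l + p) \<longrightarrow> b l = 0"
    using assms(2) unfolding hexp_def by blast
  show ?thesis unfolding hexp_def
    apply (rule exI[of _ "\<lambda>l. r1 * a l + r2 * b l"])
    using a b by (simp add: sum.distrib sum_distrib_left algebra_simps)
qed

lemma hexp_scale0: "r = 0 \<Longrightarrow> hexp n m p (r * c) (\<lambda>t. r * f t)"
  using hexp_zero by simp

lemma hexp_sum:
  assumes "finite S" "\<And>i. i \<in> S \<Longrightarrow> hexp n m p (c i) (f i)"
  shows "hexp n m p (\<Sum>i\<in>S. c i) (\<lambda>t. \<Sum>i\<in>S. f i t)"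
  using assms
proof (induction S rule: finite_induct)
  case empty
  then show ?case using hexp_zero by simp
next
  case (insert x F)
  have "hexp n m p (1 * c x + 1 * (\<Sum>i\<in>F. c i)) (\<lambda>t. 1 * f x t + 1 * (\<Sum>i\<in>F. f i t))"
    by (rule hexp_lin2) (use insert in auto)
  then show ?case using insert by simp
qed


lemma tP:
  assumes n: "n \<ge> 2"
  shows "t * gegenbauer n (Suc j) t = (real j + real n - 1) / (2 * real j + real n) * gegenbauer n (Suc (Suc j)) t
      + (real j + 1) / (2 * real j + real n) * gegenbauer n j t"
proof -
  have R: "(real (Suc j) + real n - 2) * gegenbauer n (Suc (Suc j)) t
     = (2 * real (Suc j) + real n - 2) * t * gegenbauer n (Suc j) t - real (Suc j) * gegenbauer n j t"
    using geg_rec[OF n, of "Suc j" t] by simp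
  have "2 * real j + real n \<noteq> 0" using n by simp
  then show ?thesis using R by (simp add: divide_simps)
qed

definition Lam :: "nat \<Rightarrow> nat \<Rightarrow> nat \<Rightarrow> real" where
  "Lam n i j = (if i = j then 1 / dd n i else 0)"

lemma prod_aux:
  assumes n: "n \<ge> 2"
  shows "(\<forall>j. hexp n (i + j) (i + j) (Lam n i j) (\<lambda>t. gegenbauer n i t * gegenbauer n j t))
       \<and> (\<forall>j. hexp n (Suc i + j) (Suc i + j) (Lam n (Suc i) j) (\<lambda>t. gegenbauer n (Suc i) t * gegenbauer n j t))"
proof (induction i)
  case 0
  have A: "\<forall>j. hexp n (0 + j) (0 + j) (Lam n 0 j) (\<lambda>t. gegenbauer n 0 t * gegenbauer n j t)"
  proof
    fix j
    have "hexp n j j (Lam n 0 j) (\<lambda>t. gegenbauer n 0 t * gegenbauer n j t)"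
      by (rule hexp_cong[OF hexp_P[of n j]]) (auto simp: Lam_def dd_def)
    then show "hexp n (0 + j) (0 + j) (Lam n 0 j) (\<lambda>t. gegenbauer n 0 t * gegenbauer n j t)" by simp
  qed
  have B: "hexp n (Suc 0 + j) (Suc 0 + j) (Lam n (Suc 0) j) (\<lambda>t. gegenbauer n (Suc 0) t * gegenbauer n j t)" for j
  proof (cases j)
    case 0
    have "hexp n 1 1 (Lam n 1 0) (\<lambda>t. gegenbauer n 1 t * gegenbauer n 0 t)"
      by (rule hexp_cong[OF hexp_P[of n 1]]) (auto simp: Lam_def)
    then show ?thesis using 0 by simp
  next
    case (Suc j')
    have h1: "hexp n (Suc (Suc j')) (Suc (Suc j')) 0 (gegenbauer n (Suc (Suc j')))"
      using hexp_P[of n "Suc (Suc j')"] by simp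
    have h2: "hexp n (Suc (Suc j')) (Suc (Suc j')) (if j' = 0 then 1 else 0) (gegenbauer n j')"
      by (rule hexp_weaken[OF hexp_P]) auto
    have "hexp n (Suc (Suc j')) (Suc (Suc j'))
       ((real j' + real n - 1) / (2 * real j' + real n) * 0 + (real j' + 1) / (2 * real j' + real n) * (if j' = 0 then 1 else 0))
       (\<lambda>t. (real j' + real n - 1) / (2 * real j' + real n) * gegenbauer n (Suc (Suc j')) t
          + (real j' + 1) / (2 * real j' + real n) * gegenbauer n j' t)"
      by (rule hexp_lin2[OF h1 h2])
    then have "hexp n (Suc (Suc j')) (Suc (Suc j')) (Lam n (Suc 0) j) (\<lambda>t. gegenbauer n (Suc 0) t * gegenbauer n j t)"
    proof (rule hexp_cong)
      fix t show "(real j' + real n - 1) / (2 * real j' + real n) * gegenbauer n (Suc (Suc j')) t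
          + (real j' + 1) / (2 * real j' + real n) * gegenbauer n j' t
          = gegenbauer n (Suc 0) t * gegenbauer n j t"
        using tP[OF n, of t j'] Suc by simp
    next
      show "(real j' + real n - 1) / (2 * real j' + real n) * 0 + (real j' + 1) / (2 * real j' + real n) * (if j' = 0 then 1 else 0)
         = Lam n (Suc 0) j"
        using Suc dd_1[OF n] by (simp add: Lam_def)
    qed
    then show ?thesis using Suc by simp
  qed
  show ?case using A B by simp
next
  case (Suc i)
  let ?P = "gegenbauer n"
  have IH0: "\<And>j. hexp n (i + j) (i + j) (Lam n i j) (\<lambda>t. ?P i t * ?P j t)"
    and IH1: "\<And>j. hexp n (Suc i + j) (Suc i + j) (Lam n (Suc i) j) (\<lambda>t. ?P (Suc i) t * ?P j t)"
    using Suc by auto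
  have ne: "real i + real n - 1 \<noteq> 0" using n by simp
  have rec: "?P (Suc (Suc i)) t * ?P j t = (2 * real i + real n) / (real i + real n - 1) * (?P (Suc i) t * (t * ?P j t))
     - (real i + 1) / (real i + real n - 1) * (?P i t * ?P j t)" for t j
  proof -
    have R: "(real (Suc i) + real n - 2) * ?P (Suc (Suc i)) t
     = (2 * real (Suc i) + real n - 2) * t * ?P (Suc i) t - real (Suc i) * ?P i t"
      using geg_rec[OF n, of "Suc i" t] by simp
    have R2: "(real i + real n - 1) * (?P (Suc (Suc i)) t * ?P j t)
       = (2 * real i + real n) * (?P (Suc i) t * (t * ?P j t)) - (real i + 1) * (?P i t * ?P j t)"
      using arg_cong[OF R, of "\<lambda>x. x * ?P j t"] by (simp add: algebra_simps)
    show ?thesis using R2 ne by (simp add: divide_simps mult.commute)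
  qed
  have B: "hexp n (Suc (Suc i) + j) (Suc (Suc i) + j) (Lam n (Suc (Suc i)) j) (\<lambda>t. ?P (Suc (Suc i)) t * ?P j t)" for j
  proof (cases j)
    case 0
    have h1: "hexp n (Suc (Suc i)) (Suc (Suc i)) (Lam n (Suc i) 1) (\<lambda>t. ?P (Suc i) t * ?P 1 t)"
      using IH1[of 1] by simp
    have h2: "hexp n (Suc (Suc i)) (Suc (Suc i)) (Lam n i 0) (\<lambda>t. ?P i t * ?P 0 t)"
      by (rule hexp_weaken[OF IH0[of 0]]) auto
    have "hexp n (Suc (Suc i)) (Suc (Suc i))
       ((2 * real i + real n) / (real i + real n - 1) * Lam n (Suc i) 1 + (- (real i + 1) / (real i + real n - 1)) * Lam n i 0)
       (\<lambda>t. (2 * real i + real n) / (real i + real n - 1) * (?P (Suc i) t * ?P 1 t)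
          + (- (real i + 1) / (real i + real n - 1)) * (?P i t * ?P 0 t))"
      by (rule hexp_lin2[OF h1 h2])
    then have "hexp n (Suc (Suc i)) (Suc (Suc i)) (Lam n (Suc (Suc i)) j) (\<lambda>t. ?P (Suc (Suc i)) t * ?P j t)"
    proof (rule hexp_cong)
      fix t show "(2 * real i + real n) / (real i + real n - 1) * (?P (Suc i) t * ?P 1 t)
          + (- (real i + 1) / (real i + real n - 1)) * (?P i t * ?P 0 t) = ?P (Suc (Suc i)) t * ?P j t"
        unfolding 0 rec[of t 0] by (simp add: algebra_simps add_divide_distrib[symmetric])
    next
      have "real n - 1 \<noteq> 0" using n by simp
      then show "(2 * real i + real n) / (real i + real n - 1) * Lam n (Suc i) 1 + (- (real i + 1) / (real i + real n - 1)) * Lam n i 0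
          = Lam n (Suc (Suc i)) j"
        using 0 dd_1[OF n] n by (auto simp: Lam_def dd_def divide_simps)
    qed
    then show ?thesis using 0 by simp
  next
    case (Suc j')
    let ?A = "(2 * real i + real n) / (real i + real n - 1)"
    let ?B = "(real i + 1) / (real i + real n - 1)"
    let ?al = "(real j' + real n - 1) / (2 * real j' + real n)"
    let ?be = "(real j' + 1) / (2 * real j' + real n)"
    have h1: "hexp n (Suc (Suc i) + j) (Suc (Suc i) + j) (Lam n (Suc i) (Suc (Suc j'))) (\<lambda>t. ?P (Suc i) t * ?P (Suc (Suc j')) t)"
      using IH1[of "Suc (Suc j')"] Suc by simp
    have h2: "hexp n (Suc (Suc i) + j) (Suc (Suc i) + j) (Lam n (Suc i) j') (\<lambda>t. ?P (Suc i) t * ?P j' t)"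
      by (rule hexp_weaken[OF IH1[of j']]) (auto simp: Suc)
    have h3: "hexp n (Suc (Suc i) + j) (Suc (Suc i) + j) (Lam n i j) (\<lambda>t. ?P i t * ?P j t)"
      by (rule hexp_weaken[OF IH0[of j]]) auto
    have h12: "hexp n (Suc (Suc i) + j) (Suc (Suc i) + j) (?al * Lam n (Suc i) (Suc (Suc j')) + ?be * Lam n (Suc i) j')
        (\<lambda>t. ?al * (?P (Suc i) t * ?P (Suc (Suc j')) t) + ?be * (?P (Suc i) t * ?P j' t))"
      by (rule hexp_lin2[OF h1 h2])
    have "hexp n (Suc (Suc i) + j) (Suc (Suc i) + j)
        (?A * (?al * Lam n (Suc i) (Suc (Suc j')) + ?be * Lam n (Suc i) j') + (- ?B) * Lam n i j)
        (\<lambda>t. ?A * (?al * (?P (Suc i) t * ?P (Suc (Suc j')) t) + ?be * (?P (Suc i) t * ?P j' t)) + (- ?B) * (?P i t * ?P j t))"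
      by (rule hexp_lin2[OF h12 h3])
    then show ?thesis
    proof (rule hexp_cong)
      fix t
      show "?A * (?al * (?P (Suc i) t * ?P (Suc (Suc j')) t) + ?be * (?P (Suc i) t * ?P j' t)) + (- ?B) * (?P i t * ?P j t)
          = ?P (Suc (Suc i)) t * ?P j t"
      proof -
        have e1: "?P (Suc (Suc i)) t * ?P j t = ?A * (?P (Suc i) t * (t * ?P j t)) - ?B * (?P i t * ?P j t)"
          by (rule rec)
        have e2: "t * ?P j t = ?al * ?P (Suc (Suc j')) t + ?be * ?P j' t" using tP[OF n, of t j'] Suc by simp
        show ?thesis unfolding e1 e2 by (simp only: distrib_left distrib_right mult.assoc mult.left_commute)
      qed
    next
      show "?A * (?al * Lam n (Suc i) (Suc (Suc j')) + ?be * Lam n (Suc i) j') + (- ?B) * Lam n i j = Lam n (Suc (Suc i)) j"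
      proof (cases "i = Suc j'")
        case True
        have r: "dd n (Suc i) * ((real i + 1) * (2 * real i + real n - 2)) = dd n i * ((2 * real i + real n) * (real i + real n - 2))"
          using dd_ratio[OF n, of i] True by simp
        have p: "dd n i > 0" "dd n (Suc i) > 0" using dd_pos[OF n] by auto
        have q: "real i + real n - 1 \<noteq> 0" "2 * real i + real n - 2 \<noteq> 0" "real i + real n - 2 \<noteq> 0"
          using n True by auto
        have jj: "real j' = real i - 1" using True by simp
        show ?thesis using True Suc p q r unfolding jj
          by (simp add: Lam_def divide_simps) (simp add: algebra_simps)
      next
        case F1: False
        show ?thesis
        proof (cases "j' = Suc i")
          case True
          have r: "dd n (Suc (Suc i)) * ((real (Suc i) + 1) * (2 * real (Suc i) + real n - 2))
              = dd n (Suc i) * ((2 * real (Suc i) + real n) * (real (Suc i) + real n - 2))"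
            using dd_ratio[OF n, of "Suc i"] by simp
          have p: "dd n (Suc i) > 0" "dd n (Suc (Suc i)) > 0" using dd_pos[OF n] by auto
          have q: "real i + real n - 1 \<noteq> 0" "2 * real i + real n + 2 \<noteq> 0"
            using n by auto
          have jj: "real j' = real i + 1" using True by simp
          show ?thesis using True Suc p q r unfolding jj
            by (simp add: Lam_def divide_simps) (simp add: algebra_simps)
        next
          case False
          then show ?thesis using F1 Suc by (simp add: Lam_def)
        qed
      qed
    qed
  qed
  show ?case using IH1 B by simp
qed

lemma prod_hexp:
  assumes n: "n \<ge> 2"
  shows "hexp n (i + j) (i + j) (Lam n i j) (\<lambda>t. gegenbauer n i t * gegenbauer n j t)"
  using prod_aux[OF n, of i] by blast


lemma design_sum:
  fixes C :: "(real ^ 'n) set"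
  assumes D: "kk_design k C" and H: "hexp CARD('n) (2 * k) 0 c f"
  shows "(\<Sum>x\<in>C. \<Sum>y\<in>C. f (x \<bullet> y)) = real (card C) ^ 2 * c"
proof -
  let ?P = "gegenbauer CARD('n)"
  obtain a where a: "\<forall>t. f t = (\<Sum>l\<le>2 * k. a l * ?P l t)" "a 0 = c"
      "\<forall>l. odd (l + 0) \<longrightarrow> a l = 0"
    using H unfolding hexp_def by blast
  have "(\<Sum>x\<in>C. \<Sum>y\<in>C. f (x \<bullet> y)) = (\<Sum>x\<in>C. \<Sum>y\<in>C. \<Sum>l\<le>2 * k. a l * ?P l (x \<bullet> y))"
    using a(1) by simp
  also have "\<dots> = (\<Sum>x\<in>C. \<Sum>l\<le>2 * k. \<Sum>y\<in>C. a l * ?P l (x \<bullet> y))"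
    by (rule sum.cong[OF refl], rule sum.swap)
  also have "\<dots> = (\<Sum>l\<le>2 * k. \<Sum>x\<in>C. \<Sum>y\<in>C. a l * ?P l (x \<bullet> y))"
    by (rule sum.swap)
  also have "\<dots> = (\<Sum>l\<le>2 * k. a l * sphere_moment l C)"
    unfolding sphere_moment_def by (simp add: sum_distrib_left)
  also have "\<dots> = a 0 * sphere_moment 0 C + (\<Sum>l\<in>{1..2 * k}. a l * sphere_moment l C)"
  proof -
    have "{..2 * k} = insert 0 {1..2 * k}" by auto
    then show ?thesis by simp
  qed
  also have "(\<Sum>l\<in>{1..2 * k}. a l * sphere_moment l C) = 0"
  proof (rule sum.neutral, rule ballI)
    fix l assume l: "l \<in> {1..2 * k}"
    show "a l * sphere_moment l C = 0"
    proof (cases "odd l")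
      case True then show ?thesis using a(3) by simp
    next
      case False
      then obtain i where i: "l = 2 * i" by (auto elim: evenE)
      then have "i \<in> {1..k}" using l by auto
      then have "sphere_moment (2 * i) C = 0" using D unfolding kk_design_def by blast
      then show ?thesis using i by simp
    qed
  qed
  also have "sphere_moment 0 C = real (card C) ^ 2"
    unfolding sphere_moment_def by (simp add: power2_eq_square)
  finally show ?thesis using a(2) by simp
qed

lemma Qsq_hexp:
  assumes n: "n \<ge> 2"
  shows "hexp n (2 * k) 0 (1 / DD n k) (\<lambda>t. (gegenbauer (n+2) k t) ^ 2)"
proof -
  let ?P = "gegenbauer n" and ?c = "cf n k"
  have trm: "hexp n (2 * k) 0 (?c i * ?c j * Lam n i j) (\<lambda>t. ?c i * ?c j * (?P i t * ?P j t))"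
    if ij: "i \<in> {..k}" "j \<in> {..k}" for i j
  proof (cases "?c i * ?c j = 0")
    case True
    then show ?thesis using hexp_scale0[of "?c i * ?c j" n "2 * k" 0 "Lam n i j"] by simp
  next
    case False
    then have e: "even (k - i)" "even (k - j)" by (auto simp: cf_def split: if_splits)
    have "even (i + j)" using e ij by (auto elim!: evenE)
    then have h: "hexp n (2 * k) 0 (Lam n i j) (\<lambda>t. ?P i t * ?P j t)"
      by (intro hexp_weaken[OF prod_hexp[OF n]]) (use ij in auto)
    have "hexp n (2 * k) 0 ((?c i * ?c j) * Lam n i j + 0 * 0) (\<lambda>t. (?c i * ?c j) * (?P i t * ?P j t) + 0 * 0)"
      by (rule hexp_lin2[OF h hexp_zero])
    then show ?thesis by simp
  qed
  have "hexp n (2 * k) 0 (\<Sum>i\<le>k. \<Sum>j\<le>k. ?c i * ?c j * Lam n i j)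
      (\<lambda>t. \<Sum>i\<le>k. \<Sum>j\<le>k. ?c i * ?c j * (?P i t * ?P j t))"
    by (intro hexp_sum) (auto intro: trm)
  then show ?thesis
  proof (rule hexp_cong)
    fix t
    have "(gegenbauer (n+2) k t) ^ 2 = (\<Sum>i\<le>k. ?c i * ?P i t) * (\<Sum>j\<le>k. ?c j * ?P j t)"
      using Q_exp[OF n, of k t] by (simp add: power2_eq_square)
    also have "\<dots> = (\<Sum>i\<le>k. \<Sum>j\<le>k. ?c i * ?c j * (?P i t * ?P j t))"
      by (simp add: sum_product algebra_simps)
    finally show "(\<Sum>i\<le>k. \<Sum>j\<le>k. ?c i * ?c j * (?P i t * ?P j t)) = (gegenbauer (n+2) k t) ^ 2" by simp
  next
    have Dp: "DD n k > 0" using DD_pos n by simp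
    have "(\<Sum>i\<le>k. \<Sum>j\<le>k. ?c i * ?c j * Lam n i j) = (\<Sum>i\<le>k. ?c i * ?c i / dd n i)"
    proof (rule sum.cong[OF refl])
      fix i assume i: "i \<in> {..k}"
      have "(\<Sum>j\<le>k. ?c i * ?c j * Lam n i j) = (\<Sum>j\<le>k. if i = j then ?c i * ?c i / dd n i else 0)"
        by (rule sum.cong) (auto simp: Lam_def)
      also have "\<dots> = ?c i * ?c i / dd n i" using i by simp
      finally show "(\<Sum>j\<le>k. ?c i * ?c j * Lam n i j) = ?c i * ?c i / dd n i" .
    qed
    also have "\<dots> = (\<Sum>i\<le>k. ?c i / DD n k)"
    proof (rule sum.cong[OF refl])
      fix i
      have "dd n i > 0" using dd_pos n by simp
      then show "?c i * ?c i / dd n i = ?c i / DD n k" using Dp by (simp add: cf_def)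
    qed
    also have "\<dots> = (\<Sum>i\<le>k. ?c i * ?P i 1) / DD n k"
      by (simp add: sum_divide_distrib geg_one n)
    also have "\<dots> = gegenbauer (n+2) k 1 / DD n k" using Q_exp[OF n, of k 1] by simp
    also have "\<dots> = 1 / DD n k" using geg_one[of "n+2" 1 k] n by simp
    finally show "(\<Sum>i\<le>k. \<Sum>j\<le>k. ?c i * ?c j * Lam n i j) = 1 / DD n k" .
  qed
qed

theorem mainTheorem3:
  fixes C :: "(real ^ 'n) set" and k :: nat
  assumes "CARD('n) \<ge> 2" and "k \<ge> 1" and "kk_design k C"
  shows "card C \<ge> (CARD('n) + k - 1) choose k \<and>
         (card C = (CARD('n) + k - 1) choose k \<longrightarrow>
           (\<forall>x\<in>C. \<forall>y\<in>C. x \<noteq> y \<longrightarrow> gegenbauer (CARD('n) + 2) k (x \<bullet> y) = 0))"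
proof -
  let ?n = "CARD('n)"
  let ?N = "real (card C)"
  let ?Q = "gegenbauer (?n + 2) k"
  have n: "?n \<ge> 2" using assms(1) .
  have fin: "finite C" and ne: "C \<noteq> {}" and sph: "C \<subseteq> sphere 0 1"
    using assms(3) unfolding kk_design_def by auto
  have unit: "x \<bullet> x = 1" if "x \<in> C" for x
  proof -
    have "norm x = 1" using sph that by auto
    then show ?thesis using power2_norm_eq_inner[of x] by simp
  qed
  have Q1: "?Q 1 = 1" using geg_one[of "?n + 2" 1 k] n by simp
  have S: "(\<Sum>x\<in>C. \<Sum>y\<in>C. (?Q (x \<bullet> y)) ^ 2) = ?N ^ 2 * (1 / DD ?n k)"
    using design_sum[OF assms(3) Qsq_hexp[OF n, of k]] by simp
  define T where "T = (\<Sum>x\<in>C. \<Sum>y\<in>C - {x}. (?Q (x \<bullet> y)) ^ 2)"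
  have T0: "T \<ge> 0" unfolding T_def by (intro sum_nonneg) auto
  have S2: "(\<Sum>x\<in>C. \<Sum>y\<in>C. (?Q (x \<bullet> y)) ^ 2) = ?N + T"
  proof -
    have "(\<Sum>x\<in>C. \<Sum>y\<in>C. (?Q (x \<bullet> y)) ^ 2) = (\<Sum>x\<in>C. 1 + (\<Sum>y\<in>C - {x}. (?Q (x \<bullet> y)) ^ 2))"
    proof (rule sum.cong[OF refl])
      fix x assume x: "x \<in> C"
      have "(\<Sum>y\<in>C. (?Q (x \<bullet> y)) ^ 2) = (?Q (x \<bullet> x)) ^ 2 + (\<Sum>y\<in>C - {x}. (?Q (x \<bullet> y)) ^ 2)"
        using sum.remove[OF fin x] by blast
      then show "(\<Sum>y\<in>C. (?Q (x \<bullet> y)) ^ 2) = 1 + (\<Sum>y\<in>C - {x}. (?Q (x \<bullet> y)) ^ 2)"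
        using unit[OF x] Q1 by simp
    qed
    then show ?thesis unfolding T_def by (simp add: sum.distrib)
  qed
  have Dp: "DD ?n k > 0" using DD_pos n by simp
  have Np: "?N > 0" using fin ne by (simp add: card_gt_0_iff)
  have eq: "?N ^ 2 / DD ?n k = ?N + T" using S S2 by simp
  have ge: "?N \<ge> DD ?n k"
  proof -
    have "?N ^ 2 / DD ?n k \<ge> ?N" using eq T0 by simp
    then have "?N * ?N \<ge> ?N * DD ?n k" using Dp by (simp add: field_simps power2_eq_square)
    then show ?thesis using Np by simp
  qed
  have part1: "card C \<ge> (?n + k - 1) choose k"
    using ge unfolding DD_def by simp
  have part2: "\<forall>x\<in>C. \<forall>y\<in>C. x \<noteq> y \<longrightarrow> ?Q (x \<bullet> y) = 0"
    if eqc: "card C = (?n + k - 1) choose k"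
  proof -
    have "DD ?n k = ?N" unfolding DD_def using eqc by simp
    then have "?N ^ 2 / DD ?n k = ?N" using Np by (simp add: power2_eq_square)
    then have "T = 0" using eq by simp
    then have "\<forall>x\<in>C. (\<Sum>y\<in>C - {x}. (?Q (x \<bullet> y)) ^ 2) = 0"
      unfolding T_def using fin by (subst (asm) sum_nonneg_eq_0_iff) (auto intro: sum_nonneg)
    then have "\<forall>x\<in>C. \<forall>y\<in>C - {x}. (?Q (x \<bullet> y)) ^ 2 = 0"
      using fin by (subst (asm) sum_nonneg_eq_0_iff) auto
    then show ?thesis by auto
  qed
  show ?thesis using part1 part2 by blast
qed

end
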